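(* Let $G$ be a graph such that (i) $G[N[v]]$ is a unit interval graph for every $v\in V(G)$, (ii) $G$ has no induced subgraph isomorphic to $C_{n+4}\cup K_1$ for any $n\ge0$, and (iii) there are no $v,w\in V(G)$ with $N[v]\subsetneq N[w]$. Then $G$ has no induced subgraph isomorphic to the net.
   Context: A unit interval graph is an intersection graph of unit-length intervals on the real line. $C_m$ is the cycle of length $m$, $K_1$ a single vertex, $\cup$ disjoint union. The net is the graph on $v_1,v_2,v_3,w_1,w_2,w_3$ with edges $v_1v_2,v_1v_3,v_2v_3,v_1w_1,v_2w_2,v_3w_3$. $N[v]$ is the closed neighborhood. *)

theory Defs
  imports Complex_Main
begin

definition graph :: "'a set \<Rightarrow> ('a \<Rightarrow> 'a \<Rightarrow> bool) \<Rightarrow> bool" where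
  "graph V E \<longleftrightarrow> finite V \<and> (\<forall>u v. E u v \<longrightarrow> u \<in> V \<and> v \<in> V)
      \<and> (\<forall>u v. E u v \<longrightarrow> E v u) \<and> (\<forall>v. \<not> E v v)"

definition closed_nbhd :: "'a set \<Rightarrow> ('a \<Rightarrow> 'a \<Rightarrow> bool) \<Rightarrow> 'a \<Rightarrow> 'a set" where
  "closed_nbhd V E v = {u \<in> V. u = v \<or> E v u}"

definition unit_interval_on :: "'a set \<Rightarrow> ('a \<Rightarrow> 'a \<Rightarrow> bool) \<Rightarrow> bool" where
  "unit_interval_on S E \<longleftrightarrow> (\<exists>a :: 'a \<Rightarrow> real. \<forall>u\<in>S. \<forall>w\<in>S. u \<noteq> w \<longrightarrow>
      (E u w \<longleftrightarrow> {a u .. a u + 1} \<inter> {a w .. a w + 1} \<noteq> {}))"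

definition has_induced :: "'a set \<Rightarrow> ('a \<Rightarrow> 'a \<Rightarrow> bool) \<Rightarrow> 'b set \<Rightarrow> ('b \<Rightarrow> 'b \<Rightarrow> bool) \<Rightarrow> bool" where
  "has_induced V E W F \<longleftrightarrow> (\<exists>f. inj_on f W \<and> f ` W \<subseteq> V \<and>
      (\<forall>x\<in>W. \<forall>y\<in>W. F x y \<longleftrightarrow> E (f x) (f y)))"

text \<open>C_m \<union> K_1 with m = n+4: cycle on 0..m-1, isolated vertex m.\<close>
definition cycle_plus_K1_V :: "nat \<Rightarrow> nat set" where
  "cycle_plus_K1_V m = {0..m}"

definition cycle_plus_K1_E :: "nat \<Rightarrow> nat \<Rightarrow> nat \<Rightarrow> bool" where
  "cycle_plus_K1_E m i j \<longleftrightarrow> i < m \<and> j < m \<and> (j = (i + 1) mod m \<or> i = (j + 1) mod m)"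

text \<open>The net: v1,v2,v3 = 0,1,2 (triangle), w1,w2,w3 = 3,4,5 pendant at 0,1,2.\<close>
definition net_V :: "nat set" where "net_V = {0..5}"

definition net_E :: "nat \<Rightarrow> nat \<Rightarrow> bool" where
  "net_E i j \<longleftrightarrow> {i, j} \<in> {{0,1},{0,2},{1,2},{0,3},{1,4},{2,5}}"

end

theory Submission
  imports Defs
begin


lemma int_iff: "({a..a+1} \<inter> {b..b+1::real} \<noteq> {}) \<longleftrightarrow> \<bar>a-b\<bar> \<le> 1"
proof
  assume "{a..a+1} \<inter> {b..b+1} \<noteq> {}"
  then obtain t where "t\<in>{a..a+1}" "t\<in>{b..b+1}" by blast
  then show "\<bar>a-b\<bar> \<le> 1" by auto
next
  assume "\<bar>a-b\<bar> \<le> 1" hence "max a b \<in> {a..a+1} \<inter> {b..b+1}" by (auto simp: abs_if max_def split: if_split_asm)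
  thus "{a..a+1} \<inter> {b..b+1::real} \<noteq> {}" by blast
qed

lemma claw_free:
  fixes V :: "'a set"
  assumes g: "graph V E" and ui: "\<forall>v\<in>V. unit_interval_on (closed_nbhd V E v) E"
  and x: "x \<in> V" and e: "E x y1" "E x y2" "E x y3"
  and d: "y1\<noteq>y2" "y1\<noteq>y3" "y2\<noteq>y3"
  and n: "\<not>E y1 y2" "\<not>E y1 y3" "\<not>E y2 y3"
  shows False
proof -
  have yV: "y1 \<in> V" "y2 \<in> V" "y3 \<in> V" using g e unfolding graph_def by auto
  have xy: "x \<noteq> y1" "x \<noteq> y2" "x \<noteq> y3" using g e unfolding graph_def by auto
  obtain a :: "'a \<Rightarrow> real" where a: "\<forall>u\<in>closed_nbhd V E x. \<forall>w\<in>closed_nbhd V E x. u\<noteq>w \<longrightarrow> (E u w \<longleftrightarrow> {a u..a u+1} \<inter> {a w..a w+1} \<noteq> {})"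
    using ui x unfolding unit_interval_on_def by blast
  have mem: "x \<in> closed_nbhd V E x" "y1 \<in> closed_nbhd V E x" "y2 \<in> closed_nbhd V E x" "y3 \<in> closed_nbhd V E x"
    using x yV e by (auto simp: closed_nbhd_def)
  have h: "\<And>u w. u \<in> closed_nbhd V E x \<Longrightarrow> w \<in> closed_nbhd V E x \<Longrightarrow> u\<noteq>w \<Longrightarrow> E u w \<longleftrightarrow> \<bar>a u - a w\<bar> \<le> 1"
    using a by (metis int_iff)
  have "\<bar>a x - a y1\<bar> \<le> 1" "\<bar>a x - a y2\<bar> \<le> 1" "\<bar>a x - a y3\<bar> \<le> 1"
    using h mem xy e by auto
  moreover have "\<not> \<bar>a y1 - a y2\<bar> \<le> 1" "\<not> \<bar>a y1 - a y3\<bar> \<le> 1" "\<not> \<bar>a y2 - a y3\<bar> \<le> 1"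
    using h mem d n by auto
  ultimately show False by arith
qed

definition ipath :: "'a set \<Rightarrow> ('a\<Rightarrow>'a\<Rightarrow>bool) \<Rightarrow> (nat \<Rightarrow> 'a) \<Rightarrow> nat \<Rightarrow> bool" where
 "ipath V E p m \<longleftrightarrow> (\<forall>i\<le>m. p i \<in> V) \<and> inj_on p {..m} \<and> (\<forall>i\<le>m. \<forall>j\<le>m. E (p i) (p j) \<longleftrightarrow> (i = Suc j \<or> j = Suc i))"

lemma ipath_snoc:
  assumes "ipath V E p m" "q \<in> V" "q \<notin> p ` {..m}" "E (p m) q" "\<forall>i<m. \<not> E (p i) q"
    and sym: "\<And>x y. E x y \<Longrightarrow> E y x" and irr: "\<And>x. \<not> E x x"
  shows "ipath V E (p(Suc m := q)) (Suc m)"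
  using assms unfolding ipath_def
  apply (intro conjI)
  apply (auto simp: le_Suc_eq)[1]
  apply (auto simp: inj_on_def le_Suc_eq)[1]
  apply (auto simp: le_Suc_eq)
  apply (metis le_neq_implies_less)
  done

lemma ipath_cons:
  assumes ip: "ipath V E p m" and a: "a \<in> V" "a \<notin> p ` {..m}" "E a (p 0)" "\<forall>i. 1\<le>i \<longrightarrow> i\<le>m \<longrightarrow> \<not> E a (p i)"
    and sym: "\<And>x y. E x y \<Longrightarrow> E y x" and irr: "\<And>x. \<not> E x x"
  shows "ipath V E (\<lambda>j. if j = 0 then a else p (j - 1)) (Suc m)"
proof -
  have pV: "\<forall>i\<le>m. p i \<in> V" and pinj: "inj_on p {..m}"
    and pE: "\<forall>i\<le>m. \<forall>j\<le>m. E (p i) (p j) \<longleftrightarrow> (i = Suc j \<or> j = Suc i)"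
    using ip unfolding ipath_def by auto
  have symE: "\<And>x y. E x y = E y x" using sym by blast
  have inj: "inj_on (\<lambda>j. if j = 0 then a else p (j - 1)) {..Suc m}"
  proof (rule inj_onI)
    fix x y assume xy: "x \<in> {..Suc m}" "y \<in> {..Suc m}"
      and eq: "(if x = 0 then a else p (x - 1)) = (if y = 0 then a else p (y - 1))"
    show "x = y"
    proof (cases "x = 0"; cases "y = 0")
      assume "x \<noteq> 0" "y \<noteq> 0"
      then have "p (x-1) = p (y-1)" "x - 1 \<in> {..m}" "y - 1 \<in> {..m}" using eq xy by auto
      then have "x - 1 = y - 1" using pinj unfolding inj_on_def by blast
      then show ?thesis using \<open>x \<noteq> 0\<close> \<open>y \<noteq> 0\<close> by simp
    qed (use eq xy a(2) in \<open>auto\<close>)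
  qed
  show ?thesis unfolding ipath_def
  proof (intro conjI inj allI impI)
    fix i assume "i \<le> Suc m" then show "(if i = 0 then a else p (i - 1)) \<in> V" using pV a by auto
  next
    fix i j assume ij: "i \<le> Suc m" "j \<le> Suc m"
    show "E (if i = 0 then a else p (i - 1)) (if j = 0 then a else p (j - 1)) = (i = Suc j \<or> j = Suc i)"
      using ij pE a irr symE by (cases "i = 0"; cases "j = 0") auto
  qed
qed

lemma ipath_shift:
  assumes "ipath V E p m" "i \<le> m"
  shows "ipath V E (\<lambda>j. p (i + j)) (m - i)"
  using assms unfolding ipath_def
  apply (intro conjI)
  apply (auto)[1]
  apply (simp add: inj_on_def, metis add_left_cancel atMost_iff le_diff_conv2 add.commute)
  apply auto
  done

lemma cyc_E:
  assumes "x < n + 2" "y < n + 2"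
  shows "cycle_plus_K1_E (n+2) x y \<longleftrightarrow>
     (y = Suc x \<or> x = Suc y \<or> (x = 0 \<and> y = Suc n) \<or> (y = 0 \<and> x = Suc n))"
proof -
  have m: "Suc z mod Suc (Suc n) = (if z = Suc n then 0 else Suc z)" if "z < n+2" for z
    using that by (auto simp: mod_if)
  show ?thesis using assms unfolding cycle_plus_K1_E_def by (auto simp: m)
qed

lemma cycle_contra:
  assumes g: "graph V E"
  and nc: "\<forall>n::nat. \<not> has_induced V E (cycle_plus_K1_V (n+4)) (cycle_plus_K1_E (n+4))"
  and c: "ipath V E c n" "n \<ge> 2"
  and q: "q \<in> V" "q \<notin> c ` {..n}" "E q (c 0)" "E q (c n)" "\<forall>i. 0<i \<longrightarrow> i<n \<longrightarrow> \<not>E q (c i)"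
  and z: "z\<in>V" "z \<notin> c`{..n}" "z \<noteq> q" "\<forall>i\<le>n. \<not>E z (c i)" "\<not> E z q"
  shows False
proof -
  have sym: "\<And>x y. E x y \<Longrightarrow> E y x" and irr: "\<And>x. \<not> E x x" using g unfolding graph_def by auto
  have symE: "\<And>x y. E x y = E y x" using sym by blast
  define f where "f j = (if j \<le> n then c j else if j = Suc n then q else z)" for j
  have cV: "\<forall>i\<le>n. c i \<in> V" and ci: "inj_on c {..n}"
    and cE: "\<forall>i\<le>n. \<forall>j\<le>n. E (c i) (c j) \<longleftrightarrow> (i = Suc j \<or> j = Suc i)"
    using c unfolding ipath_def by auto
  have "has_induced V E (cycle_plus_K1_V (n+2)) (cycle_plus_K1_E (n+2))"
    unfolding has_induced_def cycle_plus_K1_V_def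
  proof (intro exI[of _ f] conjI ballI)
    show "inj_on f {0..n+2}"
      unfolding inj_on_def f_def using ci q(2) z(2,3) by (auto simp: inj_on_def)
    show "f ` {0..n+2} \<subseteq> V" using cV q z unfolding f_def by auto
  next
    fix x y assume xy: "x \<in> {0..n+2}" "y \<in> {0..n+2}"
    show "cycle_plus_K1_E (n+2) x y = E (f x) (f y)"
    proof (cases "x < n+2 \<and> y < n+2")
      case True
      then have e: "cycle_plus_K1_E (n+2) x y \<longleftrightarrow>
         (y = Suc x \<or> x = Suc y \<or> (x = 0 \<and> y = Suc n) \<or> (y = 0 \<and> x = Suc n))"
        by (intro cyc_E) auto
      show ?thesis unfolding e f_def using True cE q(3,4,5) irr symE
        apply (cases "x \<le> n"; cases "y \<le> n")
        apply auto
        apply (metis Suc_le_eq less_antisym not_less_eq_eq gr0I)+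
        done
    next
      case False
      then have "\<not> cycle_plus_K1_E (n+2) x y" unfolding cycle_plus_K1_E_def by auto
      moreover have "\<not> E (f x) (f y)" using False xy z irr symE unfolding f_def by auto
      ultimately show ?thesis by simp
    qed
  qed
  moreover have "n + 2 = (n - 2) + 4" using c(2) by simp
  ultimately show False using nc by metis
qed



lemma closeB:
  fixes V :: "'a set"
  assumes g: "graph V E" and ui: "\<forall>v\<in>V. unit_interval_on (closed_nbhd V E v) E"
  and nc: "\<forall>n::nat. \<not> has_induced V E (cycle_plus_K1_V (n+4)) (cycle_plus_K1_E (n+4))"
  and p: "ipath V E p m" "1 \<le> m"
  and a: "a \<in> V" "E a (p 0)" "\<forall>i. 1\<le>i \<longrightarrow> i\<le>m \<longrightarrow> \<not>E a (p i)" "a \<notin> p`{..m}"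
  and b: "b \<in> V" "\<forall>i\<le>m. \<not>E b (p i)" "b \<notin> p`{..m}" "E a b"
  and z: "z \<in> V" "\<forall>i\<le>m. \<not>E z (p i)" "z \<notin> p`{..m}" "\<not>E z a" "\<not>E z b" "z\<noteq>a" "z\<noteq>b" "a\<noteq>b"
  and q: "q \<in> V" "E (p m) q" "\<forall>i<m. \<not>E q (p i)" "q \<notin> p`{..m}" "E q a \<or> E q b"
  shows False
proof -
  have sym: "\<And>x y. E x y \<Longrightarrow> E y x" and irr: "\<And>x. \<not> E x x" using g unfolding graph_def by auto
  have symE: "\<And>x y. E x y = E y x" using sym by blast
  have pmV: "p m \<in> V" using p unfolding ipath_def by auto
  have pma: "\<not> E (p m) a" "\<not> E (p m) b" "\<not> E (p m) z" using a(3) b(2) z(2) p(2) symE by auto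
  have pmne: "p m \<noteq> a" "p m \<noteq> b" "p m \<noteq> z" using a(4) b(3) z(3) by auto
  have qz: "\<not> E q z"
  proof
    assume qz: "E q z"
    show False
    proof (cases "E q a")
      case True
      show False using claw_free[OF g ui q(1) True qz sym[OF q(2)]] z pmne pma sym by metis
    next
      case False
      then have qb: "E q b" using q(5) by auto
      show False using claw_free[OF g ui q(1) qb qz sym[OF q(2)]] z pmne pma sym by metis
    qed
  qed
  have qne: "q \<noteq> a" "q \<noteq> b" "q \<noteq> z" using q(2) pma by auto
  define c where "c = (\<lambda>j. if j = 0 then a else p (j - 1))"
  have c: "ipath V E c (Suc m)" unfolding c_def
    by (rule ipath_cons[OF p(1) a(1) a(4) a(2) a(3) sym irr])
  have cimg: "c ` {..Suc m} \<subseteq> insert a (p ` {..m})"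
  proof (rule subsetI)
    fix y assume "y \<in> c ` {..Suc m}"
    then obtain j where j: "j \<le> Suc m" "y = c j" by auto
    then show "y \<in> insert a (p`{..m})" unfolding c_def by (cases "j=0") auto
  qed
  show False
  proof (cases "E q a")
    case True
    show False
    proof (rule cycle_contra[OF g nc c _ q(1) _ _ _ _ z(1)])
      show "2 \<le> Suc m" using p(2) by simp
      show "q \<notin> c ` {..Suc m}" using cimg q(4) qne by blast
      show "E q (c 0)" using True by (simp add: c_def)
      show "E q (c (Suc m))" using q(2) symE by (simp add: c_def)
      show "\<forall>i. 0<i \<longrightarrow> i<Suc m \<longrightarrow> \<not>E q (c i)" using q(3) by (auto simp: c_def)
      show "z \<notin> c ` {..Suc m}" using cimg z qne by blast
      show "z \<noteq> q" using qne by simp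
      show "\<forall>i\<le>Suc m. \<not>E z (c i)" using z by (auto simp: c_def)
      show "\<not> E z q" using qz sym by blast
    qed
  next
    case False
    have qb: "E q b" using False q(5) by auto
    define d where "d = c(Suc (Suc m) := q)"
    have d: "ipath V E d (Suc (Suc m))" unfolding d_def
    proof (rule ipath_snoc[OF c q(1) _ _ _ sym irr])
      show "q \<notin> c ` {..Suc m}" using cimg q(4) qne by blast
      show "E (c (Suc m)) q" using q(2) by (simp add: c_def)
      show "\<forall>i<Suc m. \<not> E (c i) q" using q(3) False sym by (auto simp: c_def) (metis Suc_pred less_Suc_eq_le not_le)
    qed
    have dimg0: "d ` {..Suc (Suc m)} \<subseteq> insert q (c ` {..Suc m})"
    proof (rule subsetI)
      fix y assume "y \<in> d ` {..Suc (Suc m)}"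
      then obtain j where j: "j \<le> Suc (Suc m)" "y = d j" by auto
      then show "y \<in> insert q (c ` {..Suc m})" by (cases "j = Suc (Suc m)") (auto simp: d_def le_Suc_eq)
    qed
    have dimg: "d ` {..Suc (Suc m)} \<subseteq> insert q (insert a (p ` {..m}))" using dimg0 cimg by blast
    show False
    proof (rule cycle_contra[OF g nc d _ b(1) _ _ _ _ z(1)])
      show "2 \<le> Suc (Suc m)" by simp
      show "b \<notin> d ` {..Suc (Suc m)}" using dimg b(3) qne z(8) by blast
      show "E b (d 0)" using b(4) symE by (simp add: d_def c_def)
      show "E b (d (Suc (Suc m)))" using qb symE by (simp add: d_def)
      show "\<forall>i. 0<i \<longrightarrow> i<Suc (Suc m) \<longrightarrow> \<not>E b (d i)" using b(2) by (auto simp: d_def c_def)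
      show "z \<notin> d ` {..Suc (Suc m)}" using dimg z qne by blast
      show "z \<noteq> b" using z by simp
      show "\<forall>i\<le>Suc (Suc m). \<not>E z (d i)" using z qz symE by (auto simp: d_def c_def le_Suc_eq)
      show "\<not> E z b" using z by simp
    qed
  qed
qed



definition good where "good V E v1 v2 v3 w1 w2 w3 p m \<longleftrightarrow> ipath V E p m \<and> 1 \<le> m \<and> p 0 = v1 \<and> p 1 = w1 \<and>
  (\<forall>i\<le>m. p i \<notin> {v2,v3,w2,w3} \<and> \<not>E (p i) w2 \<and> \<not>E (p i) w3) \<and> (\<forall>i. 1\<le>i \<longrightarrow> i\<le>m \<longrightarrow> \<not>E (p i) v2 \<and> \<not>E (p i) v3)"

lemma step:
  fixes V :: "'a set"
  assumes g: "graph V E" and ui: "\<forall>v\<in>V. unit_interval_on (closed_nbhd V E v) E"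
  and nc: "\<forall>n::nat. \<not> has_induced V E (cycle_plus_K1_V (n+4)) (cycle_plus_K1_E (n+4))"
  and ns: "\<not> (\<exists>v\<in>V. \<exists>w\<in>V. closed_nbhd V E v \<subset> closed_nbhd V E w)"
  and V: "v2 \<in> V" "v3 \<in> V" "w2 \<in> V" "w3 \<in> V"
  and E: "E v1 v2" "E v1 v3" "E v2 w2" "E v3 w3" "\<not>E v2 w3" "\<not> E v3 w2" "\<not> E w2 w3" "\<not> E w1 v2"
  and D: "v2 \<noteq> w2" "v3 \<noteq> w3" "w2 \<noteq> w3" "v2 \<noteq> w3" "v3 \<noteq> w2" "v2 \<noteq> w1"
  and gd: "good V E v1 v2 v3 w1 w2 w3 p m"
  shows "\<exists>q. good V E v1 v2 v3 w1 w2 w3 (p(Suc m := q)) (Suc m)"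
proof -
  have sym: "\<And>x y. E x y \<Longrightarrow> E y x" and irr: "\<And>x. \<not> E x x" using g unfolding graph_def by auto
  have symE: "\<And>x y. E x y = E y x" using sym by blast
  have ip: "ipath V E p m" and m1: "1 \<le> m" and p0: "p 0 = v1" and p1: "p 1 = w1"
    and inv1: "\<forall>i\<le>m. p i \<notin> {v2,v3,w2,w3} \<and> \<not>E (p i) w2 \<and> \<not>E (p i) w3"
    and inv2: "\<forall>i. 1\<le>i \<longrightarrow> i\<le>m \<longrightarrow> \<not>E (p i) v2 \<and> \<not>E (p i) v3"
    using gd unfolding good_def by auto
  have pV: "\<forall>i\<le>m. p i \<in> V" and pinj: "inj_on p {..m}"
    and pE: "\<forall>i\<le>m. \<forall>j\<le>m. E (p i) (p j) \<longleftrightarrow> (i = Suc j \<or> j = Suc i)"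
    using ip unfolding ipath_def by auto
  have pmV: "p m \<in> V" "p (m-1) \<in> V" using pV by auto
  have Epm: "E (p (m-1)) (p m)" using pE m1 by auto
  have nbne: "closed_nbhd V E (p m) \<noteq> closed_nbhd V E (p (m-1))"
  proof (cases "m = 1")
    case True
    have "v2 \<in> closed_nbhd V E (p (m-1))" using True p0 E V by (simp add: closed_nbhd_def)
    moreover have "v2 \<notin> closed_nbhd V E (p m)" using True p1 E D by (auto simp: closed_nbhd_def)
    ultimately show ?thesis by blast
  next
    case False
    then have m2: "m \<ge> 2" using m1 by simp
    have "p (m-2) \<in> closed_nbhd V E (p (m-1))" using pE pV m2
      by (simp add: closed_nbhd_def) (metis Suc_diff_Suc diff_le_self le_trans Suc_1 less_le_trans lessI numeral_2_eq_2 diff_Suc_1)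
    moreover have "p (m-2) \<notin> closed_nbhd V E (p m)"
    proof -
      have "p (m-2) \<noteq> p m" using pinj m2 unfolding inj_on_def by (metis atMost_iff diff_le_self le_refl diff_is_0_eq' zero_neq_numeral diff_diff_cancel)
      moreover have "\<not> E (p m) (p (m-2))" using pE m2 by auto
      ultimately show ?thesis by (auto simp: closed_nbhd_def)
    qed
    ultimately show ?thesis by blast
  qed
  have "\<not> closed_nbhd V E (p m) \<subseteq> closed_nbhd V E (p (m-1))"
    using ns pmV nbne by blast
  then obtain q where qa: "q \<in> closed_nbhd V E (p m)" and qb: "q \<notin> closed_nbhd V E (p (m-1))" by blast
  have qV: "q \<in> V" using qa by (simp add: closed_nbhd_def)
  have pmin: "p m \<in> closed_nbhd V E (p (m-1))" using Epm pmV by (simp add: closed_nbhd_def)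
  have Eq: "E (p m) q" using qa qb pmin by (auto simp: closed_nbhd_def)
  have nq1: "\<not> E (p (m-1)) q" "q \<noteq> p (m-1)" using qb qV by (auto simp: closed_nbhd_def)
  have qnot: "q \<notin> p ` {..m}"
  proof
    assume "q \<in> p ` {..m}"
    then obtain k where k: "k \<le> m" "q = p k" by auto
    then have "m = Suc k" using pE Eq by auto
    then show False using k nq1 by simp
  qed
  have pm4: "\<not> E (p m) v2" "\<not> E (p m) v3" "\<not> E (p m) w2" "\<not> E (p m) w3" "p m \<noteq> w2" "p m \<noteq> w3"
    using inv1 inv2 m1 by auto
  have qne: "q \<noteq> v2" "q \<noteq> v3" "q \<noteq> w2" "q \<noteq> w3" using Eq pm4 by auto
  have notin: "v2 \<notin> p ` {..m}" "v3 \<notin> p ` {..m}" "w2 \<notin> p ` {..m}" "w3 \<notin> p ` {..m}"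
    using inv1 by auto
  show ?thesis
  proof (cases "\<exists>i. i+2 \<le> m \<and> E q (p i)")
    case True
    define S where "S = {i. i+2 \<le> m \<and> E q (p i)}"
    have fS: "finite S" unfolding S_def by (rule finite_subset[of _ "{..m}"]) auto
    have neS: "S \<noteq> {}" using True unfolding S_def by auto
    define i0 where "i0 = Max S"
    have i0S: "i0 \<in> S" using fS neS unfolding i0_def by simp
    have i0max: "\<And>i. i \<in> S \<Longrightarrow> i \<le> i0" using fS unfolding i0_def by simp
    have i0: "i0 + 2 \<le> m" "E q (p i0)" using i0S unfolding S_def by auto
    obtain z where z: "z \<in> {w2,w3}" "\<not> E q z"
    proof -
      have "\<not> (E q w2 \<and> E q w3)"
      proof
        assume "E q w2 \<and> E q w3"
        then show False using claw_free[OF g ui qV sym[OF Eq], of w2 w3] pm4 D E by blast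
      qed
      then show ?thesis using that by blast
    qed
    define c where "c = (\<lambda>j. p (i0 + j))"
    have c: "ipath V E c (m - i0)" unfolding c_def by (rule ipath_shift[OF ip]) (use i0 in simp)
    have cimg: "c ` {..m - i0} \<subseteq> p ` {..m}" unfolding c_def using i0 by (auto intro!: imageI)
    show ?thesis
    proof (rule FalseE, rule cycle_contra[OF g nc c _ qV])
      show "2 \<le> m - i0" using i0 by simp
      show "q \<notin> c ` {..m - i0}" using cimg qnot by blast
      show "E q (c 0)" using i0 by (simp add: c_def)
      show "E q (c (m - i0))" using i0 Eq symE by (simp add: c_def)
      show "\<forall>j. 0<j \<longrightarrow> j < m - i0 \<longrightarrow> \<not>E q (c j)"
      proof (intro allI impI)
        fix j assume j: "0 < j" "j < m - i0"
        show "\<not> E q (c j)"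
        proof (cases "i0 + j = m - 1")
          case True then show ?thesis using nq1 symE by (auto simp: c_def)
        next
          case False
          then have "i0 + j + 2 \<le> m" using j by simp
          moreover have "\<not> i0 + j \<le> i0" using j by simp
          ultimately show ?thesis using i0max[of "i0+j"] unfolding S_def c_def by auto
        qed
      qed
      show "z \<in> V" using z V by auto
      show "z \<notin> c ` {..m - i0}" using z cimg notin by blast
      show "z \<noteq> q" using z qne by auto
      show "\<forall>j\<le>m - i0. \<not> E z (c j)"
      proof (intro allI impI)
        fix j assume "j \<le> m - i0"
        then have "i0 + j \<le> m" using i0 by simp
        then show "\<not> E z (c j)" using z inv1 symE unfolding c_def by auto
      qed
      show "\<not> E z q" using z sym by blast
    qed
  next
    case False
    have qlt: "\<forall>i<m. \<not> E q (p i)"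
    proof (intro allI impI)
      fix i assume "i < m"
      then show "\<not> E q (p i)" using False nq1 symE by (cases "i = m - 1") auto
    qed
    show ?thesis
    proof (cases "E q v2 \<or> E q w2")
      case True
      show ?thesis
      proof (rule FalseE, rule closeB[OF g ui nc ip m1 V(1) _ _ notin(1) V(3) _ notin(3) E(3) V(4) _ notin(4) _ _ _ _ D(1) qV Eq qlt qnot True])
        show "E v2 (p 0)" using p0 E symE by simp
        show "\<forall>i. 1\<le>i \<longrightarrow> i\<le>m \<longrightarrow> \<not>E v2 (p i)" using inv2 sym by blast
        show "\<forall>i\<le>m. \<not>E w2 (p i)" using inv1 sym by blast
        show "\<forall>i\<le>m. \<not>E w3 (p i)" using inv1 sym by blast
        show "\<not> E w3 v2" using E sym by blast
        show "\<not> E w3 w2" using E sym by blast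
        show "w3 \<noteq> v2" "w3 \<noteq> w2" using D by auto
      qed
    next
      case False2: False
      show ?thesis
      proof (cases "E q v3 \<or> E q w3")
        case True
        show ?thesis
        proof (rule FalseE, rule closeB[OF g ui nc ip m1 V(2) _ _ notin(2) V(4) _ notin(4) E(4) V(3) _ notin(3) _ _ _ _ D(2) qV Eq qlt qnot True])
          show "E v3 (p 0)" using p0 E symE by simp
          show "\<forall>i. 1\<le>i \<longrightarrow> i\<le>m \<longrightarrow> \<not>E v3 (p i)" using inv2 sym by blast
          show "\<forall>i\<le>m. \<not>E w3 (p i)" using inv1 sym by blast
          show "\<forall>i\<le>m. \<not>E w2 (p i)" using inv1 sym by blast
          show "\<not> E w2 v3" using E sym by blast
          show "\<not> E w2 w3" using E sym by blast
          show "w2 \<noteq> v3" "w2 \<noteq> w3" using D by auto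
        qed
      next
        case False3: False
        have ip2: "ipath V E (p(Suc m := q)) (Suc m)"
          by (rule ipath_snoc[OF ip qV qnot Eq _ sym irr]) (use qlt sym in blast)
        show ?thesis unfolding good_def
        proof (intro exI[of _ q] conjI ip2)
          show "1 \<le> Suc m" by simp
          show "(p(Suc m := q)) 0 = v1" using p0 by simp
          show "(p(Suc m := q)) 1 = w1" using p1 m1 by simp
          show "\<forall>i\<le>Suc m. (p(Suc m := q)) i \<notin> {v2, v3, w2, w3} \<and> \<not> E ((p(Suc m := q)) i) w2 \<and> \<not> E ((p(Suc m := q)) i) w3"
            using inv1 qne False2 False3 by (auto simp: le_Suc_eq)
          show "\<forall>i. 1 \<le> i \<longrightarrow> i \<le> Suc m \<longrightarrow> \<not> E ((p(Suc m := q)) i) v2 \<and> \<not> E ((p(Suc m := q)) i) v3"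
            using inv2 False2 False3 by (auto simp: le_Suc_eq)
        qed
      qed
    qed
  qed
qed

lemma good_bound:
  assumes g: "graph V E" and gd: "good V E v1 v2 v3 w1 w2 w3 p m"
  shows "Suc m \<le> card V"
proof -
  have ip: "ipath V E p m" using gd unfolding good_def by simp
  then have "inj_on p {..m}" "p ` {..m} \<subseteq> V" unfolding ipath_def by auto
  moreover have "finite V" using g unfolding graph_def by simp
  ultimately have "card (p ` {..m}) \<le> card V" by (simp add: card_mono)
  moreover have "card (p ` {..m}) = Suc m" using \<open>inj_on p {..m}\<close> by (simp add: card_image)
  ultimately show ?thesis by simp
qed

lemma netE: "net_E 0 1" "net_E 0 2" "net_E 1 2" "net_E 0 3" "net_E 1 4" "net_E 2 5"
  "\<not> net_E 0 4" "\<not> net_E 0 5" "\<not> net_E 1 3" "\<not> net_E 1 5" "\<not> net_E 2 3" "\<not> net_E 2 4"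
  "\<not> net_E 3 4" "\<not> net_E 3 5" "\<not> net_E 4 5"
  by (simp_all add: net_E_def doubleton_eq_iff)

theorem mainTheorem17:
  fixes V :: "'a set" and E :: "'a \<Rightarrow> 'a \<Rightarrow> bool"
  assumes "graph V E"
    and "\<forall>v\<in>V. unit_interval_on (closed_nbhd V E v) E"
    and "\<forall>n::nat. \<not> has_induced V E (cycle_plus_K1_V (n + 4)) (cycle_plus_K1_E (n + 4))"
    and "\<not> (\<exists>v\<in>V. \<exists>w\<in>V. closed_nbhd V E v \<subset> closed_nbhd V E w)"
  shows "\<not> has_induced V E net_V net_E"
proof
  note g = assms(1) and ui = assms(2) and nc = assms(3) and ns = assms(4)
  have sym: "\<And>x y. E x y \<Longrightarrow> E y x" and irr: "\<And>x. \<not> E x x" using g unfolding graph_def by auto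
  have symE: "\<And>x y. E x y = E y x" using sym by blast
  assume "has_induced V E net_V net_E"
  then obtain f where f: "inj_on f net_V" "f ` net_V \<subseteq> V" "\<forall>x\<in>net_V. \<forall>y\<in>net_V. net_E x y \<longleftrightarrow> E (f x) (f y)"
    unfolding has_induced_def by blast
  have mem: "0 \<in> net_V" "1 \<in> net_V" "2 \<in> net_V" "3 \<in> net_V" "4 \<in> net_V" "5 \<in> net_V"
    by (simp_all add: net_V_def)
  have fV: "f 0 \<in> V" "f 1 \<in> V" "f 2 \<in> V" "f 3 \<in> V" "f 4 \<in> V" "f 5 \<in> V" using f(2) mem by auto
  have Ef: "\<And>x y. x \<in> net_V \<Longrightarrow> y \<in> net_V \<Longrightarrow> E (f x) (f y) \<longleftrightarrow> net_E x y" using f(3) by blast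
  have E: "E (f 0) (f 1)" "E (f 0) (f 2)" "E (f 1) (f 4)" "E (f 2) (f 5)"
    "\<not> E (f 1) (f 5)" "\<not> E (f 2) (f 4)" "\<not> E (f 4) (f 5)" "\<not> E (f 3) (f 1)"
    "\<not> E (f 0) (f 4)" "\<not> E (f 0) (f 5)" "\<not> E (f 3) (f 4)" "\<not> E (f 3) (f 5)" "\<not> E (f 3) (f 2)"
    "E (f 0) (f 3)"
    using Ef[OF mem(1) mem(2)] Ef[OF mem(1) mem(3)] Ef[OF mem(2) mem(5)] Ef[OF mem(3) mem(6)]
      Ef[OF mem(2) mem(6)] Ef[OF mem(3) mem(5)] Ef[OF mem(5) mem(6)] Ef[OF mem(4) mem(2)]
      Ef[OF mem(1) mem(5)] Ef[OF mem(1) mem(6)] Ef[OF mem(4) mem(5)] Ef[OF mem(4) mem(6)] Ef[OF mem(4) mem(3)]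
      Ef[OF mem(1) mem(4)] netE symE
    by (simp_all add: net_E_def doubleton_eq_iff)
  have D: "\<And>i j. i \<in> net_V \<Longrightarrow> j \<in> net_V \<Longrightarrow> i \<noteq> j \<Longrightarrow> f i \<noteq> f j"
    using f(1) unfolding inj_on_def by blast
  have D1: "f 1 \<noteq> f 4" "f 2 \<noteq> f 5" "f 4 \<noteq> f 5" "f 1 \<noteq> f 5" "f 2 \<noteq> f 4" "f 1 \<noteq> f 3"
    "f 0 \<noteq> f 3" "f 0 \<noteq> f 1" "f 0 \<noteq> f 2" "f 0 \<noteq> f 4" "f 0 \<noteq> f 5"
    "f 3 \<noteq> f 1" "f 3 \<noteq> f 2" "f 3 \<noteq> f 4" "f 3 \<noteq> f 5"
    using D mem by simp_all
  define P where "P = good V E (f 0) (f 1) (f 2) (f 3) (f 4) (f 5)"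
  have stepP: "\<And>p m. P p m \<Longrightarrow> \<exists>q. P (p(Suc m := q)) (Suc m)"
    unfolding P_def by (rule step[OF g ui nc ns fV(2) fV(3) fV(5) fV(6) E(1-8) D1(1-6)])
  have boundP: "\<And>p m. P p m \<Longrightarrow> Suc m \<le> card V" unfolding P_def by (rule good_bound[OF g])
  have ind: "\<forall>m p. card V - m \<le> k \<longrightarrow> \<not> P p m" for k
  proof (induction k)
    case 0
    then show ?case using boundP by fastforce
  next
    case (Suc k)
    show ?case
    proof (intro allI impI notI)
      fix m p assume "card V - m \<le> Suc k" "P p m"
      then obtain q where "P (p(Suc m := q)) (Suc m)" using stepP by blast
      moreover have "card V - Suc m \<le> k" using \<open>card V - m \<le> Suc k\<close> by simp
      ultimately show False using Suc.IH by blast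
    qed
  qed
  define p0 where "p0 = (\<lambda>i::nat. if i = 0 then f 0 else f 3)"
  have ip0: "ipath V E p0 1" unfolding ipath_def p0_def
  proof (intro conjI allI impI)
    fix i assume "i \<le> (1::nat)" then show "(if i = 0 then f 0 else f 3) \<in> V" using fV by auto
  next
    show "inj_on (\<lambda>i::nat. if i = 0 then f 0 else f 3) {..1}" using D1(7) by (auto simp: inj_on_def le_Suc_eq)
  next
    fix i j :: nat assume "i \<le> 1" "j \<le> 1"
    then show "E (if i = 0 then f 0 else f 3) (if j = 0 then f 0 else f 3) = (i = Suc j \<or> j = Suc i)"
      using E(14) symE irr by (auto simp: le_Suc_eq)
  qed
  have "P p0 1" unfolding P_def good_def
  proof (intro conjI ip0)
    show "\<forall>i\<le>1. p0 i \<notin> {f 1, f 2, f 4, f 5} \<and> \<not> E (p0 i) (f 4) \<and> \<not> E (p0 i) (f 5)"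
      using D1 E by (auto simp: p0_def le_Suc_eq)
    show "\<forall>i. 1 \<le> i \<longrightarrow> i \<le> 1 \<longrightarrow> \<not> E (p0 i) (f 1) \<and> \<not> E (p0 i) (f 2)"
      using E by (auto simp: p0_def)
  qed (simp_all add: p0_def)
  then show False using ind[of "card V"] by auto
qed


end
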